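(* Let $X$ be a completely regular (Tychonoff) space and $C(X)$ the ring of real-valued continuous functions on $X$. The following are equivalent: (1) for any two ideals $A,B$ of $C(X)$ with $A\cap B=(0)$, $\mathrm{Ann}(A)+\mathrm{Ann}(B)=C(X)$; (2) $X$ is extremally disconnected.
   Context: $\mathrm{Ann}(A)=\{f\in C(X): fA=0\}$. A space $X$ is extremally disconnected if the closure of every open set is open. *)

theory Defs
  imports "HOL-Analysis.Analysis"
begin

text \<open>Functions are
  normalised to be 0 outside the topological space, so that equality in C(X)
  is equality of HOL functions and the ring operations are pointwise.\<close>
definition CX :: "'a topology \<Rightarrow> ('a \<Rightarrow> real) set" where
  "CX X = {f. continuous_map X euclideanreal f \<and> (\<forall>x. x \<notin> topspace X \<longrightarrow> f x = 0)}"

definition ideal_CX :: "'a topology \<Rightarrow> ('a \<Rightarrow> real) set \<Rightarrow> bool" where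
  "ideal_CX X A \<longleftrightarrow> A \<subseteq> CX X \<and> (\<lambda>x. 0) \<in> A
     \<and> (\<forall>f\<in>A. \<forall>g\<in>A. (\<lambda>x. f x - g x) \<in> A)
     \<and> (\<forall>f\<in>A. \<forall>h\<in>CX X. (\<lambda>x. h x * f x) \<in> A)"

definition Ann :: "'a topology \<Rightarrow> ('a \<Rightarrow> real) set \<Rightarrow> ('a \<Rightarrow> real) set" where
  "Ann X A = {f \<in> CX X. \<forall>g\<in>A. (\<lambda>x. f x * g x) = (\<lambda>x. 0)}"

definition set_plus_CX :: "('a \<Rightarrow> real) set \<Rightarrow> ('a \<Rightarrow> real) set \<Rightarrow> ('a \<Rightarrow> real) set" where
  "set_plus_CX A B = {(\<lambda>x. f x + g x) | f g. f \<in> A \<and> g \<in> B}"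

definition extremally_disconnected :: "'a topology \<Rightarrow> bool" where
  "extremally_disconnected X \<longleftrightarrow> (\<forall>U. openin X U \<longrightarrow> openin X (X closure_of U))"

end

theory Submission
  imports Defs
begin

lemma clopen_indicator_cont:
  assumes "closedin X C" "openin X C"
  shows "continuous_map X euclideanreal (\<lambda>x. if x \<in> C then 1 else (0::real))"
  unfolding continuous_map_def
proof (intro conjI allI impI)
  show "(\<lambda>x. if x \<in> C then 1 else (0::real)) \<in> topspace X \<rightarrow> topspace euclideanreal" by simp
  fix T :: "real set" assume "openin euclideanreal T"
  have CS: "C \<subseteq> topspace X" using assms(2) openin_subset by auto
  have e: "{x \<in> topspace X. (if x \<in> C then 1 else 0) \<in> T} =
        (if 1 \<in> T then C else {}) \<union> (if 0 \<in> T then topspace X - C else {})"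
    by (cases "1 \<in> T"; cases "0 \<in> T") (use CS in auto)
  have o2: "openin X (topspace X - C)" using assms(1) by (simp add: openin_diff)
  show "openin X {x \<in> topspace X. (if x \<in> C then 1 else 0) \<in> T}"
    unfolding e by (cases "1 \<in> T"; cases "0 \<in> T") (simp_all add: assms(2) o2 openin_Un)
qed

lemma bump:
  assumes cr: "completely_regular_space X" and U: "openin X U" and x: "x \<in> U"
  shows "\<exists>h\<in>CX X. h x = 1 \<and> (\<forall>y. y \<notin> U \<longrightarrow> h y = 0)"
proof -
  have US: "U \<subseteq> topspace X" using U openin_subset by auto
  have "\<exists>f. continuous_map X euclideanreal f \<and> f x = 0 \<and> f ` (topspace X - U) \<subseteq> {1}"
    using cr[unfolded completely_regular_space_alt', rule_format, OF U x] .
  then obtain f where fc: "continuous_map X euclideanreal f" and f: "True" "f x = 0"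
      "f ` (topspace X - U) \<subseteq> {1}" by blast
  define h where "h = (\<lambda>y. if y \<in> topspace X then 1 - f y else 0)"
  have "continuous_map X euclideanreal (\<lambda>y. 1 - f y)"
    by (intro continuous_intros fc)
  then have "continuous_map X euclideanreal h"
    by (rule continuous_map_eq) (simp add: h_def)
  then have "h \<in> CX X" by (simp add: CX_def h_def)
  moreover have "h x = 1" using f(2) x US by (auto simp: h_def)
  moreover have "\<forall>y. y \<notin> U \<longrightarrow> h y = 0" using f(3) by (auto simp: h_def)
  ultimately show ?thesis by blast
qed

lemma CX_mult: "f \<in> CX X \<Longrightarrow> g \<in> CX X \<Longrightarrow> (\<lambda>x. f x * g x) \<in> CX X"
  unfolding CX_def mem_Collect_eq
  by (intro conjI continuous_map_real_mult; simp)

lemma CX_add: "f \<in> CX X \<Longrightarrow> g \<in> CX X \<Longrightarrow> (\<lambda>x. f x + g x) \<in> CX X"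
  unfolding CX_def mem_Collect_eq
  by (intro conjI continuous_map_add; simp)

lemma CX_diff: "f \<in> CX X \<Longrightarrow> g \<in> CX X \<Longrightarrow> (\<lambda>x. f x - g x) \<in> CX X"
  unfolding CX_def mem_Collect_eq
  by (intro conjI continuous_map_diff; simp)

lemma coz_open: "f \<in> CX X \<Longrightarrow> openin X {x \<in> topspace X. f x \<noteq> 0}"
proof -
  assume "f \<in> CX X"
  then have c: "continuous_map X euclideanreal f" by (simp add: CX_def)
  have "openin X {x \<in> topspace X. f x \<in> - {0}}"
    by (rule openin_continuous_map_preimage[OF c]) (simp add: open_Compl)
  then show ?thesis by simp
qed

definition vanish :: "'a topology \<Rightarrow> 'a set \<Rightarrow> ('a \<Rightarrow> real) set" where
  "vanish X U = {f \<in> CX X. \<forall>x. x \<notin> U \<longrightarrow> f x = 0}"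

lemma vanish_ideal: "ideal_CX X (vanish X U)"
  unfolding ideal_CX_def vanish_def
  by (auto simp: CX_mult CX_diff) (simp add: CX_def)

lemma ann_vanish:
  assumes cr: "completely_regular_space X" and U: "openin X U" and a: "a \<in> Ann X (vanish X U)"
    and x: "x \<in> U"
  shows "a x = 0"
proof -
  obtain h where h: "h \<in> CX X" "h x = 1" "\<forall>y. y \<notin> U \<longrightarrow> h y = 0"
    using bump[OF cr U x] by blast
  then have "h \<in> vanish X U" by (simp add: vanish_def)
  then have "(\<lambda>y. a y * h y) = (\<lambda>y. 0)" using a by (auto simp: Ann_def)
  then have "a x * h x = 0" by meson
  then show ?thesis using h(2) by simp
qed

theorem theorem2p5:
  fixes X :: "'a topology"
  assumes "completely_regular_space X" and "Hausdorff_space X"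
  shows "(\<forall>A B. ideal_CX X A \<and> ideal_CX X B \<and> A \<inter> B = {\<lambda>x. 0}
            \<longrightarrow> set_plus_CX (Ann X A) (Ann X B) = CX X)
         \<longleftrightarrow> extremally_disconnected X"
proof
  assume H: "\<forall>A B. ideal_CX X A \<and> ideal_CX X B \<and> A \<inter> B = {\<lambda>x. 0}
            \<longrightarrow> set_plus_CX (Ann X A) (Ann X B) = CX X"
  show "extremally_disconnected X"
    unfolding extremally_disconnected_def
  proof (intro allI impI)
    fix U assume U: "openin X U"
    define V where "V = topspace X - X closure_of U"
    have V: "openin X V" unfolding V_def by (simp add: openin_diff)
    have UV: "U \<inter> V = {}" using U unfolding V_def
      by (meson Diff_disjoint closure_of_subset disjoint_iff openin_subset subsetD)
    have "vanish X U \<inter> vanish X V = {\<lambda>x. 0}"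
    proof
      show "vanish X U \<inter> vanish X V \<subseteq> {\<lambda>x. 0}"
        using UV by (auto simp: vanish_def)
      show "{\<lambda>x. 0} \<subseteq> vanish X U \<inter> vanish X V"
        using vanish_ideal unfolding ideal_CX_def by blast
    qed
    then have eq: "set_plus_CX (Ann X (vanish X U)) (Ann X (vanish X V)) = CX X"
      using H vanish_ideal by blast
    define one where "one = (\<lambda>x. if x \<in> topspace X then 1 else (0::real))"
    have "continuous_map X euclideanreal (\<lambda>x. 1::real)" by simp
    then have "continuous_map X euclideanreal one"
      by (rule continuous_map_eq) (simp add: one_def)
    then have "one \<in> CX X" by (simp add: CX_def one_def)
    then obtain a b where ab: "one = (\<lambda>x. a x + b x)" "a \<in> Ann X (vanish X U)"
        "b \<in> Ann X (vanish X V)"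
      using eq unfolding set_plus_CX_def by blast
    have a0: "a x = 0" if "x \<in> U" for x using ann_vanish[OF assms(1) U ab(2) that] .
    have b0: "b x = 0" if "x \<in> V" for x using ann_vanish[OF assms(1) V ab(3) that] .
    have bc: "continuous_map X euclideanreal b" using ab(3) by (auto simp: Ann_def CX_def)
    have US: "U \<subseteq> topspace X" using U openin_subset by auto
    have sum: "a x + b x = 1" if "x \<in> topspace X" for x
      using fun_cong[OF ab(1), of x] that by (simp add: one_def)
    have cl: "closedin X {x \<in> topspace X. b x \<in> {1}}"
      by (rule closedin_continuous_map_preimage[OF bc]) simp
    have "U \<subseteq> {x \<in> topspace X. b x \<in> {1}}" using US a0 sum by fastforce
    then have c1: "X closure_of U \<subseteq> {x \<in> topspace X. b x \<in> {1}}"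
      using cl by (simp add: closure_of_minimal)
    have op: "openin X {x \<in> topspace X. b x \<in> - {0}}"
      by (rule openin_continuous_map_preimage[OF bc]) (simp add: open_Compl)
    have "X closure_of U = {x \<in> topspace X. b x \<in> - {0}}"
    proof
      show "X closure_of U \<subseteq> {x \<in> topspace X. b x \<in> - {0}}" using c1 by auto
      show "{x \<in> topspace X. b x \<in> - {0}} \<subseteq> X closure_of U"
        using b0 unfolding V_def by auto
    qed
    then show "openin X (X closure_of U)" using op by simp
  qed
next
  assume ED: "extremally_disconnected X"
  show "\<forall>A B. ideal_CX X A \<and> ideal_CX X B \<and> A \<inter> B = {\<lambda>x. 0}
            \<longrightarrow> set_plus_CX (Ann X A) (Ann X B) = CX X"
  proof (intro allI impI)
    fix A B assume AB: "ideal_CX X A \<and> ideal_CX X B \<and> A \<inter> B = {\<lambda>x. 0}"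
    have ACX: "A \<subseteq> CX X" and BCX: "B \<subseteq> CX X" using AB by (auto simp: ideal_CX_def)
    have fg0: "f x * g x = 0" if "f \<in> A" "g \<in> B" for f g x
    proof -
      have "g \<in> CX X" "f \<in> CX X" using that ACX BCX by auto
      then have "(\<lambda>x. g x * f x) \<in> A" "(\<lambda>x. f x * g x) \<in> B"
        using AB that unfolding ideal_CX_def by blast+
      then have "(\<lambda>x. f x * g x) \<in> A \<inter> B" by (simp add: mult.commute)
      then have "(\<lambda>x. f x * g x) = (\<lambda>x. 0)" using AB by blast
      then show ?thesis by meson
    qed
    define U where "U = (\<Union>f\<in>A. {x \<in> topspace X. f x \<noteq> 0})"
    define V where "V = (\<Union>g\<in>B. {x \<in> topspace X. g x \<noteq> 0})"
    have oU: "openin X U" unfolding U_def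
      using ACX coz_open by (intro openin_Union) blast
    have oV: "openin X V" unfolding V_def
      using BCX coz_open by (intro openin_Union) blast
    have UV: "U \<inter> V = {}"
    proof (rule ccontr)
      assume "U \<inter> V \<noteq> {}"
      then obtain x f g where "f \<in> A" "g \<in> B" "f x \<noteq> 0" "g x \<noteq> 0"
        unfolding U_def V_def by blast
      with fg0 show False by fastforce
    qed
    define C where "C = X closure_of U"
    have oC: "openin X C" using ED oU by (simp add: extremally_disconnected_def C_def)
    have cC: "closedin X C" by (simp add: C_def)
    have CV: "C \<inter> V = {}"
    proof -
      have "U \<subseteq> topspace X - V" using UV oU openin_subset by auto
      moreover have "closedin X (topspace X - V)" using oV by (simp add: closedin_diff)
      ultimately have "C \<subseteq> topspace X - V" by (simp add: C_def closure_of_minimal)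
      then show ?thesis by auto
    qed
    define e where "e = (\<lambda>x. if x \<in> C then 1 else (0::real))"
    define e' where "e' = (\<lambda>x. if x \<in> topspace X - C then 1 else (0::real))"
    have CS: "C \<subseteq> topspace X" using cC closedin_subset by auto
    have eC: "e \<in> CX X" using clopen_indicator_cont[OF cC oC] CS
      by (auto simp: CX_def e_def)
    have cC': "closedin X (topspace X - C)" using oC by (simp add: closedin_diff)
    have oC': "openin X (topspace X - C)" using cC by (simp add: openin_diff)
    have "continuous_map X euclideanreal e'"
      unfolding e'_def by (rule clopen_indicator_cont[OF cC' oC'])
    then have eC': "e' \<in> CX X" by (simp add: CX_def e'_def)
    show "set_plus_CX (Ann X A) (Ann X B) = CX X"
    proof
      show "set_plus_CX (Ann X A) (Ann X B) \<subseteq> CX X"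
      proof
        fix k assume "k \<in> set_plus_CX (Ann X A) (Ann X B)"
        then obtain f g where "k = (\<lambda>x. f x + g x)" "f \<in> Ann X A" "g \<in> Ann X B"
          unfolding set_plus_CX_def by blast
        then show "k \<in> CX X" by (simp add: CX_add Ann_def)
      qed
      show "CX X \<subseteq> set_plus_CX (Ann X A) (Ann X B)"
      proof
        fix h assume h: "h \<in> CX X"
        have h1: "(\<lambda>x. h x * e' x) \<in> Ann X A"
          unfolding Ann_def
        proof (intro CollectI conjI ballI CX_mult h eC')
          fix f assume f: "f \<in> A"
          show "(\<lambda>x. h x * e' x * f x) = (\<lambda>x. 0)"
          proof
            fix x
            show "h x * e' x * f x = 0"
            proof (cases "x \<in> topspace X - C")
              case True
              then have "x \<notin> U" using closure_of_subset[of U X] oU openin_subset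
                unfolding C_def by blast
              then have "f x = 0 \<or> x \<notin> topspace X" using f unfolding U_def by auto
              then show ?thesis using f ACX by (auto simp: CX_def)
            qed (auto simp: e'_def)
          qed
        qed
        have h2: "(\<lambda>x. h x * e x) \<in> Ann X B"
          unfolding Ann_def
        proof (intro CollectI conjI ballI CX_mult h eC)
          fix g assume g: "g \<in> B"
          show "(\<lambda>x. h x * e x * g x) = (\<lambda>x. 0)"
          proof
            fix x
            show "h x * e x * g x = 0"
            proof (cases "x \<in> C")
              case True
              then have "x \<notin> V" using CV by blast
              then have "g x = 0" using g True CS unfolding V_def by auto
              then show ?thesis by simp
            qed (simp add: e_def)
          qed
        qed
        have heq: "h = (\<lambda>x. h x * e' x + h x * e x)"
        proof
          fix x show "h x = h x * e' x + h x * e x"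
            using h CS by (cases "x \<in> topspace X") (auto simp: e_def e'_def CX_def)
        qed
        show "h \<in> set_plus_CX (Ann X A) (Ann X B)"
          unfolding set_plus_CX_def mem_Collect_eq
          by (rule exI[of _ "\<lambda>x. h x * e' x"], rule exI[of _ "\<lambda>x. h x * e x"])
            (use heq h1 h2 in blast)
      qed
    qed
  qed
qed

end
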